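(* Let $r\ge1$ be an integer and $n=2r$ or $n=2r-1$. Let $\xi_j=e^{2\pi i(j-1)/n}$, $\zeta_j=e^{2\pi i(j-r)/n}$ for $j=1,\dots,n$. For $0<\vartheta<\frac\pi{2n}$ let $\mathbb S_n(\vartheta)=\{z:-\frac\pi2-\frac\pi n+\vartheta<\arg z<-\frac\pi2+\frac{3\pi}n-\vartheta\}$ if $n=2r$ and $\mathbb S_n(\vartheta)=\{z:-\frac\pi2-\frac\pi n+\vartheta<\arg z<-\frac\pi2+\frac{2\pi}n-\vartheta\}$ if $n=2r-1$. Then: (1.1) for $k=1,\dots,r$, $\operatorname{Im}(\xi_kz+\zeta_{r-k+1}\overline z)=0$ for all $z\in\mathbb C$; (1.2) for $k,j\in\{1,\dots,r\}$ with $k+j\ge r+2$ and all $z\in\mathbb S_n(\vartheta)$, $\operatorname{Im}(\xi_kz+\zeta_j\overline z)\ge2\sin\big(\frac{k+j-r-1}n\pi\big)\sin\vartheta\cdot|z|$; (2.1) for $k=1,\dots,n-r$, $\operatorname{Im}(\xi_{k+r}z+\zeta_{n-k+1}\overline z)=0$ for all $z\in\mathbb C$; (2.2) for $k,j\in\{1,\dots,n-r\}$ with $k+j\le n-r$ and all $z\in\mathbb S_n(\vartheta)$, $\operatorname{Im}(\xi_{k+r}z+\zeta_{j+r}\overline z)\ge2\sin\big(\frac{n-r-k-j+1}n\pi\big)\sin\vartheta\cdot|z|$ if $n=2r$, and $\ge2\sin\big(\frac{n-r-k-j+1}n\pi\big)\sin(\frac\pi n+\vartheta)\cdot|z|$ if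 $n=2r-1$. *)

theory Defs
  imports "HOL-Analysis.Analysis"
begin

definition xi :: "nat \<Rightarrow> nat \<Rightarrow> complex" where
  "xi n j = exp (2 * pi * \<i> * complex_of_real ((real j - 1) / real n))"

definition zeta :: "nat \<Rightarrow> nat \<Rightarrow> nat \<Rightarrow> complex" where
  "zeta n r j = exp (2 * pi * \<i> * complex_of_real ((real j - real r) / real n))"

text \<open>The sector S_n(theta); arg is the principal argument Arg (values in (-pi,pi]).\<close>
definition sector :: "nat \<Rightarrow> nat \<Rightarrow> real \<Rightarrow> complex set" where
  "sector n r \<theta> =
     (if n = 2 * r
      then {z. - pi / 2 - pi / real n + \<theta> < Arg z \<and> Arg z < - pi / 2 + 3 * pi / real n - \<theta>}
      else {z. - pi / 2 - pi / real n + \<theta> < Arg z \<and> Arg z < - pi / 2 + 2 * pi / real n - \<theta>})"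

end

theory Submission
  imports Defs
begin

lemma key:
  fixes x y :: real and z :: complex
  shows "Im (exp (2*pi*\<i>*complex_of_real x) * z + exp (2*pi*\<i>*complex_of_real y) * cnj z)
     = 2 * cmod z * sin (pi*(x+y)) * cos (pi*(x-y) + Arg z)"
proof -
  define \<rho> \<phi> where "\<rho> = cmod z" and "\<phi> = Arg z"
  have z: "z = complex_of_real \<rho> * cis \<phi>"
    using rcis_cmod_Arg[of z] by (simp add: rcis_def \<rho>_def \<phi>_def)
  have e: "\<And>t. exp (2*pi*\<i>*complex_of_real t) = cis (2*pi*t)"
    by (simp add: cis_conv_exp mult_ac)
  have "Im (exp (2*pi*\<i>*complex_of_real x) * z + exp (2*pi*\<i>*complex_of_real y) * cnj z)
      = \<rho> * (sin (2*pi*x + \<phi>) + sin (2*pi*y - \<phi>))"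
    unfolding e z by (simp add: sin_add sin_diff algebra_simps)
  also have "sin (2*pi*x + \<phi>) + sin (2*pi*y - \<phi>) = sin (pi*(x+y) + (pi*(x-y) + \<phi>)) + sin (pi*(x+y) - (pi*(x-y) + \<phi>))"
    by (simp add: algebra_simps)
  also have "\<dots> = 2 * sin (pi*(x+y)) * cos (pi*(x-y) + \<phi>)"
    by (simp add: sin_add sin_diff)
  finally show ?thesis by (simp add: \<rho>_def \<phi>_def)
qed

lemma cosbound:
  fixes x t :: real
  assumes "\<bar>x\<bar> \<le> pi/2 - t" "0 \<le> t" "t \<le> pi/2"
  shows "sin t \<le> cos x"
proof -
  have "cos x = cos \<bar>x\<bar>" by simp
  moreover have "sin t = cos (pi/2 - t)" by (simp add: sin_cos_eq)
  moreover have "cos (pi/2 - t) \<le> cos \<bar>x\<bar>"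
    using assms by (intro cos_monotone_0_pi_le) auto
  ultimately show ?thesis by simp
qed

lemma bnd_aux:
  fixes \<rho> S t C :: real
  assumes a: "0 \<le> \<rho>" "0 \<le> S" "sin t \<le> C"
  shows "2 * S * sin t * \<rho> \<le> 2 * \<rho> * S * C"
proof -
  have "S * sin t \<le> S * C" using a by (simp add: mult_left_mono)
  hence "\<rho> * (S * sin t) \<le> \<rho> * (S * C)" using a by (simp add: mult_left_mono)
  thus ?thesis by (simp add: algebra_simps)
qed

theorem lemma8p4:
  fixes r n :: nat and \<theta> :: real
  assumes "r \<ge> 1"
    and "n = 2 * r \<or> n = 2 * r - 1"
    and "0 < \<theta>" and "\<theta> < pi / (2 * real n)"
  shows
    "(\<forall>k \<in> {1..r}. \<forall>z. Im (xi n k * z + zeta n r (r - k + 1) * cnj z) = 0)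
   \<and> (\<forall>k \<in> {1..r}. \<forall>j \<in> {1..r}. k + j \<ge> r + 2 \<longrightarrow>
        (\<forall>z \<in> sector n r \<theta>.
           Im (xi n k * z + zeta n r j * cnj z)
             \<ge> 2 * sin ((real k + real j - real r - 1) / real n * pi) * sin \<theta> * cmod z))
   \<and> (\<forall>k \<in> {1..n - r}. \<forall>z. Im (xi n (k + r) * z + zeta n r (n - k + 1) * cnj z) = 0)
   \<and> (\<forall>k \<in> {1..n - r}. \<forall>j \<in> {1..n - r}. k + j \<le> n - r \<longrightarrow>
        (\<forall>z \<in> sector n r \<theta>.
           Im (xi n (k + r) * z + zeta n r (j + r) * cnj z)
             \<ge> 2 * sin ((real n - real r - real k - real j + 1) / real n * pi)
                 * (if n = 2 * r then sin \<theta> else sin (pi / real n + \<theta>)) * cmod z))"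
  proof -
  have n0: "real n > 0" using assms(1,2) by auto
  define q where "q = pi / real n"
  have q0: "q > 0" using n0 by (simp add: q_def)
  have nq: "real n * q = pi" using n0 by (simp add: q_def)
  have th: "\<theta> < q / 2" using assms(4) by (simp add: q_def)
  have n1: "real n \<ge> 1" using assms(1,2) by auto
  have qpi: "q \<le> pi" unfolding q_def using n1 divide_left_mono[of 1 "real n" pi] by simp
  have nrr: "n = 2 * r \<or> real n = 2 * real r - 1" using assms(1,2) by auto
  have sec: "\<And>z. z \<in> sector n r \<theta> \<Longrightarrow> - pi / 2 - q + \<theta> < Arg z \<and>
      Arg z < - pi / 2 + (if n = 2 * r then 3 else 2) * q - \<theta>"
    by (auto simp: sector_def q_def split: if_splits)
  have P1: "\<forall>k \<in> {1..r}. \<forall>z. Im (xi n k * z + zeta n r (r - k + 1) * cnj z) = 0"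
  proof (intro ballI allI)
    fix k z assume k: "k \<in> {1..r}"
    have "Im (xi n k * z + zeta n r (r - k + 1) * cnj z) =
      2 * cmod z * sin (pi*((real k - 1) / real n + (real (r - k + 1) - real r) / real n)) *
        cos (pi*((real k - 1) / real n - (real (r - k + 1) - real r) / real n) + Arg z)"
      unfolding xi_def zeta_def by (rule key)
    also have "(real k - 1) / real n + (real (r - k + 1) - real r) / real n = 0"
      using k by (simp add: of_nat_diff add_divide_distrib[symmetric])
    finally show "Im (xi n k * z + zeta n r (r - k + 1) * cnj z) = 0" by simp
  qed
  have P3: "\<forall>k \<in> {1..n - r}. \<forall>z. Im (xi n (k + r) * z + zeta n r (n - k + 1) * cnj z) = 0"
  proof (intro ballI allI)
    fix k z assume k: "k \<in> {1..n - r}"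
    have kn: "k \<le> n" using k by auto
    have "Im (xi n (k + r) * z + zeta n r (n - k + 1) * cnj z) =
      2 * cmod z * sin (pi*((real (k + r) - 1) / real n + (real (n - k + 1) - real r) / real n)) *
        cos (pi*((real (k + r) - 1) / real n - (real (n - k + 1) - real r) / real n) + Arg z)"
      unfolding xi_def zeta_def by (rule key)
    also have "pi*((real (k + r) - 1) / real n + (real (n - k + 1) - real r) / real n) = pi"
      using k n0 kn by (simp add: of_nat_diff field_simps)
    finally show "Im (xi n (k + r) * z + zeta n r (n - k + 1) * cnj z) = 0" by simp
  qed
  have P2: "\<forall>k \<in> {1..r}. \<forall>j \<in> {1..r}. k + j \<ge> r + 2 \<longrightarrow>
        (\<forall>z \<in> sector n r \<theta>.
           Im (xi n k * z + zeta n r j * cnj z)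
             \<ge> 2 * sin ((real k + real j - real r - 1) / real n * pi) * sin \<theta> * cmod z)"
  proof (intro ballI impI)
    fix k j z assume k: "k \<in> {1..r}" and j: "j \<in> {1..r}" and kj: "k + j \<ge> r + 2"
      and z: "z \<in> sector n r \<theta>"
    have kr0: "real (r + 2) \<le> real (k + j)" using kj by (simp only: of_nat_le_iff)
    have kr: "real k \<le> real r" "real j \<le> real r" "real k + real j \<ge> real r + 2"
      using k j kr0 by auto
    have nr: "real n \<ge> 2 * real r - 1" using assms(1,2) by auto
    have e: "Im (xi n k * z + zeta n r j * cnj z) =
      2 * cmod z * sin (pi*((real k - 1) / real n + (real j - real r) / real n)) *
        cos (pi*((real k - 1) / real n - (real j - real r) / real n) + Arg z)"
      unfolding xi_def zeta_def by (rule key)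
    have s: "pi*((real k - 1) / real n + (real j - real r) / real n) = (real k + real j - real r - 1) / real n * pi"
      using n0 by (simp add: field_simps)
    have c: "pi*((real k - 1) / real n - (real j - real r) / real n) = (real k - real j + real r - 1) * q"
      using n0 by (simp add: field_simps q_def)
    have S: "0 \<le> sin ((real k + real j - real r - 1) / real n * pi)"
    proof (rule sin_ge_zero)
      show "0 \<le> (real k + real j - real r - 1) / real n * pi" using kr n0 by simp
      have "(real k + real j - real r - 1) / real n \<le> 1" using kr nr n0 by simp
      thus "(real k + real j - real r - 1) / real n * pi \<le> pi" by (metis mult_right_mono pi_ge_zero mult_1)
    qed
    define D where "D = real k - real j + real r - 1"
    have D1: "D * q \<ge> 1 * q" using kr q0 by (intro mult_right_mono) (auto simp: D_def)
    have D2: "D * q \<le> (2 * real r - 3) * q" using kr q0 by (intro mult_right_mono) (auto simp: D_def)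
    have C: "sin \<theta> \<le> cos ((real k - real j + real r - 1) * q + Arg z)"
    proof (rule cosbound)
      have ph: "- pi / 2 - q + \<theta> < Arg z" "Arg z < - pi / 2 + (if n = 2 * r then 3 else 2) * q - \<theta>"
        using sec[OF z] by auto
      have Dq: "(real k - real j + real r - 1) * q = D * q" by (simp add: D_def)
      show "\<bar>(real k - real j + real r - 1) * q + Arg z\<bar> \<le> pi / 2 - \<theta>"
      proof (cases "n = 2 * r")
        case True
        have "(2 * real r - 3) * q = real n * q - 3 * q" using True by (simp add: algebra_simps)
        moreover have "Arg z < - pi / 2 + 3 * q - \<theta>" using ph(2) True by simp
        ultimately show ?thesis unfolding Dq abs_le_iff using ph(1) nq D1 D2 by linarith
      next
        case False
        have e2: "2 * real r = real n + 1" using False nrr by simp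
        have "(2 * real r - 3) * q = (real n - 2) * q" using e2 by simp
        also have "\<dots> = real n * q - 2 * q" by (simp add: algebra_simps)
        finally have "(2 * real r - 3) * q = real n * q - 2 * q" .
        moreover have "Arg z < - pi / 2 + 2 * q - \<theta>" using ph(2) False by simp
        ultimately show ?thesis unfolding Dq abs_le_iff using ph(1) nq D1 D2 by linarith
      qed
      show "0 \<le> \<theta>" using assms by simp
      show "\<theta> \<le> pi/2" using th qpi by linarith
    qed
    show "Im (xi n k * z + zeta n r j * cnj z)
             \<ge> 2 * sin ((real k + real j - real r - 1) / real n * pi) * sin \<theta> * cmod z"
      unfolding e s c using bnd_aux[OF norm_ge_zero[of z] S C] by simp
  qed
  have P4: "\<forall>k \<in> {1..n - r}. \<forall>j \<in> {1..n - r}. k + j \<le> n - r \<longrightarrow>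
        (\<forall>z \<in> sector n r \<theta>.
           Im (xi n (k + r) * z + zeta n r (j + r) * cnj z)
             \<ge> 2 * sin ((real n - real r - real k - real j + 1) / real n * pi)
                 * (if n = 2 * r then sin \<theta> else sin (pi / real n + \<theta>)) * cmod z)"
  proof (intro ballI impI)
    fix k j z assume k: "k \<in> {1..n - r}" and j: "j \<in> {1..n - r}" and kj: "k + j \<le> n - r"
      and z: "z \<in> sector n r \<theta>"
    have rn: "r \<le> n" using assms(1,2) by auto
    have kr0: "real (k + j) \<le> real (n - r)" using kj by (simp only: of_nat_le_iff)
    have kr: "real k \<ge> 1" "real j \<ge> 1" "real k + real j \<le> real n - real r"
      using k j kr0 rn by (auto simp: of_nat_diff)
    have nr: "real n \<ge> 2 * real r - 1" "real n \<le> 2 * real r" using assms(1,2) by auto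
    have e: "Im (xi n (k + r) * z + zeta n r (j + r) * cnj z) =
      2 * cmod z * sin (pi*((real (k + r) - 1) / real n + (real (j + r) - real r) / real n)) *
        cos (pi*((real (k + r) - 1) / real n - (real (j + r) - real r) / real n) + Arg z)"
      unfolding xi_def zeta_def by (rule key)
    have s: "pi*((real (k + r) - 1) / real n + (real (j + r) - real r) / real n) =
       pi - (real n - real r - real k - real j + 1) / real n * pi"
      using n0 by (simp add: field_simps)
    have c: "pi*((real (k + r) - 1) / real n - (real (j + r) - real r) / real n) = (real k - real j + real r - 1) * q"
      using n0 by (simp add: field_simps q_def)
    have S: "0 \<le> sin ((real n - real r - real k - real j + 1) / real n * pi)"
    proof (rule sin_ge_zero)
      show "0 \<le> (real n - real r - real k - real j + 1) / real n * pi" using kr n0 by simp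
      have "(real n - real r - real k - real j + 1) / real n \<le> 1" using kr nr n0 by simp
      thus "(real n - real r - real k - real j + 1) / real n * pi \<le> pi" by (metis mult_right_mono pi_ge_zero mult_1)
    qed
    define D where "D = real k - real j + real r - 1"
    have ph: "- pi / 2 - q + \<theta> < Arg z" "Arg z < - pi / 2 + (if n = 2 * r then 3 else 2) * q - \<theta>"
      using sec[OF z] by auto
    have thpi: "\<theta> \<le> pi/2" using th qpi by linarith
    show "Im (xi n (k + r) * z + zeta n r (j + r) * cnj z)
             \<ge> 2 * sin ((real n - real r - real k - real j + 1) / real n * pi)
                 * (if n = 2 * r then sin \<theta> else sin (pi / real n + \<theta>)) * cmod z"
    proof (cases "n = 2 * r")
      case True
      have nr2: "real n = 2 * real r" using True by simp
      have D1: "D * q \<ge> 1 * q" using kr nr2 q0 by (intro mult_right_mono) (auto simp: D_def)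
      have D2: "D * q \<le> (real n - 3) * q" using kr nr2 q0 by (intro mult_right_mono) (auto simp: D_def)
      have C: "sin \<theta> \<le> cos ((real k - real j + real r - 1) * q + Arg z)"
      proof (rule cosbound)
        have "(real n - 3) * q = real n * q - 3 * q" by (simp add: algebra_simps)
        moreover have "Arg z < - pi / 2 + 3 * q - \<theta>" using ph(2) True by simp
        moreover have Dq: "(real k - real j + real r - 1) * q = D * q" by (simp add: D_def)
        ultimately show "\<bar>(real k - real j + real r - 1) * q + Arg z\<bar> \<le> pi / 2 - \<theta>"
          unfolding Dq abs_le_iff using ph(1) nq D1 D2 by linarith
        show "0 \<le> \<theta>" using assms by simp
        show "\<theta> \<le> pi/2" by (rule thpi)
      qed
      show ?thesis
        unfolding e s c sin_pi_minus using bnd_aux[OF norm_ge_zero[of z] S C] True by simp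
    next
      case False
      have nr2: "real n = 2 * real r - 1" using False nrr by auto
      have n5: "real n \<ge> 3" using kr nr2 by simp
      have D1: "D * q \<ge> 2 * q" using kr nr2 q0 by (intro mult_right_mono) (auto simp: D_def)
      have D2: "D * q \<le> (real n - 3) * q" using kr nr2 q0 by (intro mult_right_mono) (auto simp: D_def)
      have q3: "q \<le> pi / 3" unfolding q_def using n5 by (intro divide_left_mono) auto
      have C: "sin (q + \<theta>) \<le> cos ((real k - real j + real r - 1) * q + Arg z)"
      proof (rule cosbound)
        have "(real n - 3) * q = real n * q - 3 * q" by (simp add: algebra_simps)
        moreover have "Arg z < - pi / 2 + 2 * q - \<theta>" using ph(2) False by simp
        moreover have Dq: "(real k - real j + real r - 1) * q = D * q" by (simp add: D_def)
        ultimately show "\<bar>(real k - real j + real r - 1) * q + Arg z\<bar> \<le> pi / 2 - (q + \<theta>)"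
          unfolding Dq abs_le_iff using ph(1) nq D1 D2 by linarith
        show "0 \<le> q + \<theta>" using assms q0 by simp
        show "q + \<theta> \<le> pi/2" using q3 th by simp
      qed
      show ?thesis
        unfolding e s c sin_pi_minus using bnd_aux[OF norm_ge_zero[of z] S C] False by (simp add: q_def)
    qed
  qed
  show ?thesis using P1 P2 P3 P4 by blast
qed

end
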